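(* Fix a vertex $\mu$, let $\widehat f,\widehat g,\widehat h\in\mathbb Q^\Gamma$, $f=\widehat fV$, and for $i\sim\mu$ put $U_i=\Gamma^\mu_i\setminus\{i\}$. Then $$\big(\widehat f_{\langle\widehat g\rangle[\widehat h]}\big)_i=\begin{cases}\widehat f_\mu-\sum_{\nu\sim\mu}\rho_{[\mu,\nu]}(\mu)\widehat h_\nu & i=\mu,\\ \widehat f_i+\widehat h_i+\sum_{j\in U_i}\rho_{[i,j]}(\mu)\widehat g_j & i\sim\mu,\\ \widehat f_i-\widehat g_i&\text{otherwise.}\end{cases}$$ Moreover, for every vertex $i$, $$(\widehat f_{\langle\widehat g\rangle}V)_i=f_i-\sum_{\nu\sim\mu}\sum_{j\in\Gamma^\mu_\nu}\widehat g_j\,\varphi^{[\nu,j]}_\mu(i)\,V_{\mu,i},\qquad (\widehat f_{[\widehat h]}V)_i=f_i+\sum_{\nu\sim\mu}\widehat h_\nu\,\varphi^{[\mu,\nu]}_\mu(i)\,V_{\mu,i}.$$ Consequently, if $\widehat g\ge0$ then $(\widehat f_{\langle\widehat g\rangle}V)_i\le f_i$ for all $i$, with strict inequality exactly when $i\in\Gamma^\nu_j$ for some $\nu\sim\mu$ and some $j\in\Gamma^\mu_\nu$ with $\widehat g_j>0$ (in particular equality holds when $d(\mu,i)\le1$); and if $\widehat h\ge0$ then $(\widehat f_{[\widehat h]}V)_i\ge f_i$, with strict inequality exactly when $i\in\Gamma^\mu_\nu$ for some $\nu\sim\mu$ with $\widehat h_\nu>0$.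
   Context: Setting: $R$ two-dimensional regular local ring with algebraically closed residue field; $\pi:X=X_{N+1}\to\cdots\to X_1=\operatorname{Spec}R$ a composition of point blowups; $E_\nu$ strict transforms of the exceptional divisors; proximity matrix $P$ ($p_{\mu,\mu}=1$, $p_{\mu,\nu}=-1$ if $x_\mu$ lies on the strict transform on $X_\mu$ of the exceptional divisor of the blowup of $x_\nu$, else $0$), valuation matrix $V=(P^TP)^{-1}$ (symmetric, positive entries). Dual graph $\Gamma$ on vertices $1..N$, $\gamma\sim\eta$ iff $\gamma\ne\eta$ and $E_\gamma\cap E_\eta\neq\emptyset$ (a tree); $d$ graph distance; branch $\Gamma^\mu_\nu$ = maximal connected subgraph containing $\nu$ but not $\mu$ ($\Gamma^\mu_\mu=\emptyset$). $\mathbf 1_i$ is the standard basis vector of $\mathbb Q^\Gamma$; $\rho_{[\alpha,\beta]}(\nu)=V_{\beta,\nu}/V_{\alpha,\nu}$; $\widehat r_{[\alpha,\beta]}=\mathbf 1_\beta-\rho_{[\alpha,\beta]}(\alpha)\mathbf 1_\alpha$; $\varphi^{[\alpha,\beta]}_\eta(\nu)=(\widehat r_{[\alpha,\beta]}V)_\nu/V_{\eta,\nu}$. For the fixed $\mu$: $\widehat f_{\langle\widehat g\rangle[\widehat h]}=\widehat f-\sum_{i\sim\mu}\sum_{j\in\Gamma^\mu_i}\widehat g_j\widehat r_{[i,j]}+\sum_{i\sim\mu}\widehat h_i\widehat r_{[\mu,i]}$; $\widehat f_{\langle\widehat g\rangle}$ and $\widehat f_{[\widehat h]}$ denote the cases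 $\widehat h=0$ and $\widehat g=0$ respectively. *)

theory Defs
  imports Complex_Main
begin

text \<open>
  Points x_1,...,x_N are blown up; x_1 is the closed point of Spec R.  Every closed point of
  X_k (k >= 2) lies on the exceptional locus, i.e. on one curve E_i (a free point of E_i) or on
  the intersection of two curves E_i, E_j (a satellite point).  The choice for x_k is recorded
  by ch k.  Curves are indexed 1..N (E_nu is the strict transform of the exceptional divisor of
  the blowup of x_nu).
\<close>

datatype bchoice = Free nat | Sat nat nat

text \<open>dgraph ch k a b: the curves E_a and E_b (a, b in 1..k) meet on X_(k+1).\<close>
fun dgraph :: "(nat \<Rightarrow> bchoice) \<Rightarrow> nat \<Rightarrow> nat \<Rightarrow> nat \<Rightarrow> bool" where
  "dgraph ch 0 a b = False"
| "dgraph ch (Suc 0) a b = False"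
| "dgraph ch (Suc (Suc k)) a b =
     (case ch (Suc (Suc k)) of
        Free i \<Rightarrow> dgraph ch (Suc k) a b \<or> (a = Suc (Suc k) \<and> b = i) \<or> (a = i \<and> b = Suc (Suc k))
      | Sat i j \<Rightarrow> (dgraph ch (Suc k) a b \<and> \<not> ({a, b} = {i, j}))
                  \<or> (a = Suc (Suc k) \<and> (b = i \<or> b = j))
                  \<or> (b = Suc (Suc k) \<and> (a = i \<or> a = j)))"

definition valid_blowups :: "nat \<Rightarrow> (nat \<Rightarrow> bchoice) \<Rightarrow> bool" where
  "valid_blowups N ch \<longleftrightarrow>
     (\<forall>k\<in>{2..N}. case ch k of
        Free i \<Rightarrow> 1 \<le> i \<and> i < k
      | Sat i j \<Rightarrow> 1 \<le> i \<and> i < k \<and> 1 \<le> j \<and> j < k \<and> i \<noteq> j \<and> dgraph ch (k - 1) i j)"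

text \<open>x_k lies on the strict transform on X_k of the exceptional divisor of the blowup of x_i.\<close>
definition proximate :: "(nat \<Rightarrow> bchoice) \<Rightarrow> nat \<Rightarrow> nat \<Rightarrow> bool" where
  "proximate ch k i \<longleftrightarrow> 2 \<le> k \<and> (case ch k of Free a \<Rightarrow> i = a | Sat a b \<Rightarrow> i = a \<or> i = b)"

definition proxmat :: "(nat \<Rightarrow> bchoice) \<Rightarrow> nat \<Rightarrow> nat \<Rightarrow> rat" where
  "proxmat ch m n = (if m = n then 1 else if proximate ch m n then -1 else 0)"

definition PtP :: "nat \<Rightarrow> (nat \<Rightarrow> bchoice) \<Rightarrow> nat \<Rightarrow> nat \<Rightarrow> rat" where
  "PtP N ch a b = (\<Sum>c\<in>{1..N}. proxmat ch c a * proxmat ch c b)"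

definition is_valuation_matrix :: "nat \<Rightarrow> (nat \<Rightarrow> bchoice) \<Rightarrow> (nat \<Rightarrow> nat \<Rightarrow> rat) \<Rightarrow> bool" where
  "is_valuation_matrix N ch V \<longleftrightarrow>
     (\<forall>a\<in>{1..N}. \<forall>b\<in>{1..N}.
        (\<Sum>c\<in>{1..N}. PtP N ch a c * V c b) = (if a = b then 1 else 0) \<and>
        (\<Sum>c\<in>{1..N}. V a c * PtP N ch c b) = (if a = b then 1 else 0))"

definition nbrs :: "nat \<Rightarrow> (nat \<Rightarrow> bchoice) \<Rightarrow> nat \<Rightarrow> nat set" where
  "nbrs N ch m = {i\<in>{1..N}. i \<noteq> m \<and> dgraph ch N m i}"

definition branch :: "nat \<Rightarrow> (nat \<Rightarrow> bchoice) \<Rightarrow> nat \<Rightarrow> nat \<Rightarrow> nat set" where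
  "branch N ch m n =
     (let S = {1..N} - {m};
          E = {(a, b). a \<in> S \<and> b \<in> S \<and> a \<noteq> b \<and> dgraph ch N a b}
      in if n \<in> S then {w. (n, w) \<in> E\<^sup>*} else {})"

definition vecmat :: "nat \<Rightarrow> (nat \<Rightarrow> rat) \<Rightarrow> (nat \<Rightarrow> nat \<Rightarrow> rat) \<Rightarrow> nat \<Rightarrow> rat" where
  "vecmat N x V n = (\<Sum>a\<in>{1..N}. x a * V a n)"

definition unitv :: "nat \<Rightarrow> nat \<Rightarrow> rat" where
  "unitv i k = (if k = i then 1 else 0)"

definition rho :: "(nat \<Rightarrow> nat \<Rightarrow> rat) \<Rightarrow> nat \<Rightarrow> nat \<Rightarrow> nat \<Rightarrow> rat" where
  "rho V a b n = V b n / V a n"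

definition rhat :: "(nat \<Rightarrow> nat \<Rightarrow> rat) \<Rightarrow> nat \<Rightarrow> nat \<Rightarrow> nat \<Rightarrow> rat" where
  "rhat V a b k = unitv b k - rho V a b a * unitv a k"

definition phi :: "nat \<Rightarrow> (nat \<Rightarrow> nat \<Rightarrow> rat) \<Rightarrow> nat \<Rightarrow> nat \<Rightarrow> nat \<Rightarrow> nat \<Rightarrow> rat" where
  "phi N V a b e n = vecmat N (rhat V a b) V n / V e n"

definition fmod :: "nat \<Rightarrow> (nat \<Rightarrow> bchoice) \<Rightarrow> (nat \<Rightarrow> nat \<Rightarrow> rat) \<Rightarrow> nat
    \<Rightarrow> (nat \<Rightarrow> rat) \<Rightarrow> (nat \<Rightarrow> rat) \<Rightarrow> (nat \<Rightarrow> rat) \<Rightarrow> nat \<Rightarrow> rat" where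
  "fmod N ch V m fh gh hh k =
     fh k - (\<Sum>i\<in>nbrs N ch m. \<Sum>j\<in>branch N ch m i. gh j * rhat V i j k)
          + (\<Sum>i\<in>nbrs N ch m. hh i * rhat V m i k)"

end

theory Submission
  imports Defs
begin

lemma rtrancl_proj:
  assumes "(x,y) \<in> R\<^sup>*" and "\<And>u v. (u,v) \<in> R \<Longrightarrow> f u = f v \<or> (f u, f v) \<in> S"
  shows "(f x, f y) \<in> S\<^sup>*"
  using assms(1)
proof (induction rule: rtrancl_induct)
  case base then show ?case by simp
next
  case (step y z)
  from assms(2)[OF step(2)] show ?case
    using step(3) by (metis rtrancl.rtrancl_into_rtrancl)
qed

definition tree_inv :: "(nat \<Rightarrow> nat \<Rightarrow> bool) \<Rightarrow> nat \<Rightarrow> bool" where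
 "tree_inv g k \<longleftrightarrow> (\<forall>a b. g a b \<longrightarrow> a \<in> {1..k} \<and> b \<in> {1..k} \<and> a \<noteq> b \<and> g b a)
   \<and> (\<forall>x\<in>{1..k}. (1,x) \<in> {(u,v). g u v}\<^sup>*)
   \<and> (\<forall>a b. g a b \<longrightarrow> (a,b) \<notin> {(x,y). g x y \<and> {x,y} \<noteq> {a,b}}\<^sup>*)"

lemma tree_free:
  assumes T: "tree_inv g k" and i: "1 \<le> i" "i \<le> k"
  shows "tree_inv (\<lambda>a b. g a b \<or> (a = Suc k \<and> b = i) \<or> (a = i \<and> b = Suc k)) (Suc k)"
proof -
  define n where "n = Suc k"
  define g' where "g' = (\<lambda>a b. g a b \<or> (a = n \<and> b = i) \<or> (a = i \<and> b = n))"
  have R: "\<And>a b. g a b \<Longrightarrow> a \<in> {1..k} \<and> b \<in> {1..k} \<and> a \<noteq> b \<and> g b a"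
    and C: "\<And>x. x\<in>{1..k} \<Longrightarrow> (1,x) \<in> {(u,v). g u v}\<^sup>*"
    and A: "\<And>a b. g a b \<Longrightarrow> (a,b) \<notin> {(x,y). g x y \<and> {x,y} \<noteq> {a,b}}\<^sup>*"
    using T unfolding tree_inv_def by blast+
  have R': "\<forall>a b. g' a b \<longrightarrow> a \<in> {1..n} \<and> b \<in> {1..n} \<and> a \<noteq> b \<and> g' b a"
    using R i unfolding g'_def n_def by fastforce
  have C': "\<forall>x\<in>{1..n}. (1,x) \<in> {(u,v). g' u v}\<^sup>*"
  proof
    fix x assume x: "x \<in> {1..n}"
    have sub: "{(u,v). g u v}\<^sup>* \<subseteq> {(u,v). g' u v}\<^sup>*"
      by (rule rtrancl_mono) (auto simp: g'_def)
    show "(1,x) \<in> {(u,v). g' u v}\<^sup>*"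
    proof (cases "x = n")
      case True
      have "(1,i) \<in> {(u,v). g' u v}\<^sup>*" using C[of i] i sub by auto
      moreover have "(i,n) \<in> {(u,v). g' u v}" by (simp add: g'_def)
      ultimately show ?thesis using True by (metis rtrancl.rtrancl_into_rtrancl)
    next
      case False
      then have "x \<in> {1..k}" using x n_def by auto
      then show ?thesis using C sub by blast
    qed
  qed
  have A': "\<forall>a b. g' a b \<longrightarrow> (a,b) \<notin> {(x,y). g' x y \<and> {x,y} \<noteq> {a,b}}\<^sup>*"
  proof (intro allI impI notI)
    fix a b assume ab: "g' a b" and p: "(a,b) \<in> {(x,y). g' x y \<and> {x,y} \<noteq> {a,b}}\<^sup>*"
    show False
    proof (cases "g a b")
      case True
      define f where "f = (\<lambda>x. if x = n then i else x)"
      have "(f a, f b) \<in> {(x,y). g x y \<and> {x,y} \<noteq> {a,b}}\<^sup>*"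
      proof (rule rtrancl_proj[OF p])
        fix u v assume "(u,v) \<in> {(x,y). g' x y \<and> {x,y} \<noteq> {a,b}}"
        then have uv: "g' u v" "{u,v} \<noteq> {a,b}" by auto
        show "f u = f v \<or> (f u, f v) \<in> {(x,y). g x y \<and> {x,y} \<noteq> {a,b}}"
        proof (cases "g u v")
          case True
          then have "u \<noteq> n" "v \<noteq> n" using R[OF True] n_def by auto
          then show ?thesis using True uv by (simp add: f_def)
        next
          case False
          then show ?thesis using uv by (auto simp: g'_def f_def)
        qed
      qed
      moreover have "f a = a" "f b = b" using R[OF True] n_def f_def by auto
      ultimately show False using A[OF True] by simp
    next
      case False
      then have ab2: "{a,b} = {n,i}" using ab by (auto simp: g'_def)
      define f where "f = (\<lambda>x. x = n)"
      have "(f a, f b) \<in> ({}::(bool\<times>bool) set)\<^sup>*"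
      proof (rule rtrancl_proj[OF p])
        fix u v assume "(u,v) \<in> {(x,y). g' x y \<and> {x,y} \<noteq> {a,b}}"
        then have uv: "g' u v" "{u,v} \<noteq> {n,i}" using ab2 by auto
        show "f u = f v \<or> (f u, f v) \<in> {}"
        proof (cases "g u v")
          case True
          then have "u \<noteq> n" "v \<noteq> n" using R[OF True] n_def by auto
          then show ?thesis by (simp add: f_def)
        next
          case False
          then show ?thesis using uv by (auto simp: g'_def f_def insert_commute)
        qed
      qed
      then have "f a = f b" by simp
      moreover have "i \<noteq> n" using i n_def by auto
      ultimately show False using ab2 unfolding f_def by (auto simp: doubleton_eq_iff)
    qed
  qed
  show ?thesis using R' C' A' unfolding tree_inv_def g'_def n_def by blast
qed


lemma tree_sat:
  assumes T: "tree_inv g k" and gij: "g i j"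
  shows "tree_inv (\<lambda>a b. (g a b \<and> {a,b} \<noteq> {i,j}) \<or> (a = Suc k \<and> (b = i \<or> b = j)) \<or> (b = Suc k \<and> (a = i \<or> a = j))) (Suc k)"
proof -
  define n where "n = Suc k"
  define g' where "g' = (\<lambda>a b. (g a b \<and> {a,b} \<noteq> {i,j}) \<or> (a = n \<and> (b = i \<or> b = j)) \<or> (b = n \<and> (a = i \<or> a = j)))"
  have R: "\<And>a b. g a b \<Longrightarrow> a \<in> {1..k} \<and> b \<in> {1..k} \<and> a \<noteq> b \<and> g b a"
    and C: "\<And>x. x\<in>{1..k} \<Longrightarrow> (1,x) \<in> {(u,v). g u v}\<^sup>*"
    and A: "\<And>a b. g a b \<Longrightarrow> (a,b) \<notin> {(x,y). g x y \<and> {x,y} \<noteq> {a,b}}\<^sup>*"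
    using T unfolding tree_inv_def by blast+
  have ij: "i \<in> {1..k}" "j \<in> {1..k}" "i \<noteq> j" "g j i" using R[OF gij] by auto
  have nk: "n \<notin> {1..k}" using n_def by auto
  have R': "\<forall>a b. g' a b \<longrightarrow> a \<in> {1..n} \<and> b \<in> {1..n} \<and> a \<noteq> b \<and> g' b a"
  proof (intro allI impI)
    fix a b assume "g' a b"
    then consider "g a b \<and> {a,b} \<noteq> {i,j}" | "a = n \<and> (b = i \<or> b = j)" | "b = n \<and> (a = i \<or> a = j)"
      by (auto simp: g'_def)
    then show "a \<in> {1..n} \<and> b \<in> {1..n} \<and> a \<noteq> b \<and> g' b a"
    proof cases
      case 1
      then have "a \<in> {1..k}" "b \<in> {1..k}" "a \<noteq> b" "g b a" using R by blast+
      moreover have "{b,a} \<noteq> {i,j}" using 1 by (simp add: insert_commute)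
      ultimately show ?thesis by (auto simp: g'_def n_def)
    next
      case 2
      then show ?thesis using ij by (auto simp: g'_def n_def)
    next
      case 3
      then show ?thesis using ij by (auto simp: g'_def n_def)
    qed
  qed
  have C': "\<forall>x\<in>{1..n}. (1,x) \<in> {(u,v). g' u v}\<^sup>*"
  proof
    fix x assume x: "x \<in> {1..n}"
    have sub0: "{(u,v). g u v} \<subseteq> {(u,v). g' u v}\<^sup>*"
    proof
      fix p assume "p \<in> {(u,v). g u v}"
      then obtain u v where p: "p = (u,v)" "g u v" by auto
      show "p \<in> {(u,v). g' u v}\<^sup>*"
      proof (cases "{u,v} = {i,j}")
        case False then show ?thesis using p by (auto simp: g'_def)
      next
        case True
        then have "(u = i \<and> v = j) \<or> (u = j \<and> v = i)" by (auto simp: doubleton_eq_iff)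
        moreover have "(i,n) \<in> {(u,v). g' u v}" "(n,j) \<in> {(u,v). g' u v}"
          "(j,n) \<in> {(u,v). g' u v}" "(n,i) \<in> {(u,v). g' u v}" by (auto simp: g'_def)
        ultimately show ?thesis using p by (meson converse_rtrancl_into_rtrancl r_into_rtrancl)
      qed
    qed
    have sub: "{(u,v). g u v}\<^sup>* \<subseteq> {(u,v). g' u v}\<^sup>*"
      by (rule rtrancl_subset_rtrancl[OF sub0])
    show "(1,x) \<in> {(u,v). g' u v}\<^sup>*"
    proof (cases "x = n")
      case True
      have "(1,i) \<in> {(u,v). g' u v}\<^sup>*" using C[of i] ij sub by auto
      moreover have "(i,n) \<in> {(u,v). g' u v}" by (simp add: g'_def)
      ultimately show ?thesis using True by (metis rtrancl.rtrancl_into_rtrancl)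
    next
      case False
      then have "x \<in> {1..k}" using x n_def by auto
      then show ?thesis using C sub by blast
    qed
  qed
  have A': "\<forall>a b. g' a b \<longrightarrow> (a,b) \<notin> {(x,y). g' x y \<and> {x,y} \<noteq> {a,b}}\<^sup>*"
  proof (intro allI impI notI)
    fix a b assume ab: "g' a b" and p: "(a,b) \<in> {(x,y). g' x y \<and> {x,y} \<noteq> {a,b}}\<^sup>*"
    show False
    proof (cases "g a b \<and> {a,b} \<noteq> {i,j}")
      case True
      define f where "f = (\<lambda>x. if x = n then i else x)"
      have "(f a, f b) \<in> {(x,y). g x y \<and> {x,y} \<noteq> {a,b}}\<^sup>*"
      proof (rule rtrancl_proj[OF p])
        fix u v assume "(u,v) \<in> {(x,y). g' x y \<and> {x,y} \<noteq> {a,b}}"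
        then have uv: "g' u v" "{u,v} \<noteq> {a,b}" by auto
        show "f u = f v \<or> (f u, f v) \<in> {(x,y). g x y \<and> {x,y} \<noteq> {a,b}}"
        proof (cases "g u v \<and> {u,v} \<noteq> {i,j}")
          case True
          then have "u \<noteq> n" "v \<noteq> n" using R nk by blast+
          then show ?thesis using True uv by (simp add: f_def)
        next
          case False
          then have "(u = n \<and> (v = i \<or> v = j)) \<or> (v = n \<and> (u = i \<or> u = j))"
            using uv by (auto simp: g'_def)
          then show ?thesis using gij ij True nk by (auto simp: f_def insert_commute)
        qed
      qed
      moreover have "f a = a" "f b = b" using R True nk f_def by auto
      ultimately show False using A True by simp
    next
      case False
      then have ab2: "{a,b} = {n,i} \<or> {a,b} = {n,j}" using ab by (auto simp: g'_def)
      then obtain c d where cd: "{a,b} = {n,c}" "{c,d} = {i,j}" "c \<noteq> d"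
        using ij by (auto simp: insert_commute)
      have gcd: "g d c" "g c d" using cd gij ij by (auto simp: doubleton_eq_iff)
      have cdk: "c \<in> {1..k}" "d \<in> {1..k}" using R gcd by auto
      define f where "f = (\<lambda>x. if x = n then d else x)"
      have "(f a, f b) \<in> {(x,y). g x y \<and> {x,y} \<noteq> {i,j}}\<^sup>*"
      proof (rule rtrancl_proj[OF p])
        fix u v assume "(u,v) \<in> {(x,y). g' x y \<and> {x,y} \<noteq> {a,b}}"
        then have uv: "g' u v" "{u,v} \<noteq> {n,c}" using cd by auto
        show "f u = f v \<or> (f u, f v) \<in> {(x,y). g x y \<and> {x,y} \<noteq> {i,j}}"
        proof (cases "g u v \<and> {u,v} \<noteq> {i,j}")
          case True
          then have "u \<noteq> n" "v \<noteq> n" using R nk by blast+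
          then show ?thesis using True by (simp add: f_def)
        next
          case False
          then have "(u = n \<and> (v = i \<or> v = j)) \<or> (v = n \<and> (u = i \<or> u = j))"
            using uv by (auto simp: g'_def)
          then have "(u = n \<and> v = d) \<or> (v = n \<and> u = d)" using uv cd
            by (auto simp: doubleton_eq_iff)
          then show ?thesis by (auto simp: f_def)
        qed
      qed
      moreover have "(f a = c \<and> f b = d) \<or> (f a = d \<and> f b = c)"
        using cd cdk nk unfolding f_def by (auto simp: doubleton_eq_iff)
      moreover have "{c,d} = {d,c}" by auto
      ultimately show False using A[OF gcd(1)] A[OF gcd(2)] cd by auto
    qed
  qed
  show ?thesis using R' C' A' unfolding tree_inv_def g'_def n_def by blast
qed


lemma valid_at:
  assumes "valid_blowups N ch" "2 \<le> k" "k \<le> N"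
  shows "case ch k of Free i \<Rightarrow> 1 \<le> i \<and> i < k
      | Sat i j \<Rightarrow> 1 \<le> i \<and> i < k \<and> 1 \<le> j \<and> j < k \<and> i \<noteq> j \<and> dgraph ch (k - 1) i j"
  using assms unfolding valid_blowups_def by auto

lemma prox_lt:
  assumes "valid_blowups N ch" "c \<le> N" "proximate ch c a"
  shows "1 \<le> a \<and> a < c"
proof -
  have c2: "2 \<le> c" using assms(3) unfolding proximate_def by auto
  show ?thesis using valid_at[OF assms(1) c2 assms(2)] assms(3) unfolding proximate_def
    by (cases "ch c") auto
qed

lemma dg_suc:
  assumes "1 \<le> k"
  shows "dgraph ch (Suc k) = (case ch (Suc k) of
        Free i \<Rightarrow> (\<lambda>a b. dgraph ch k a b \<or> (a = Suc k \<and> b = i) \<or> (a = i \<and> b = Suc k))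
      | Sat i j \<Rightarrow> (\<lambda>a b. (dgraph ch k a b \<and> {a, b} \<noteq> {i, j})
                  \<or> (a = Suc k \<and> (b = i \<or> b = j))
                  \<or> (b = Suc k \<and> (a = i \<or> a = j))))"
proof -
  obtain k' where k: "k = Suc k'" using assms by (cases k) auto
  show ?thesis unfolding k by (rule ext, rule ext) (simp split: bchoice.split)
qed

lemma tree_dg:
  assumes V: "valid_blowups N ch"
  shows "1 \<le> k \<Longrightarrow> k \<le> N \<Longrightarrow> tree_inv (dgraph ch k) k"
proof (induction k rule: nat_induct_at_least)
  case base
  show ?case unfolding tree_inv_def by (simp add: numeral_eq_Suc)
next
  case (Suc k)
  have T: "tree_inv (dgraph ch k) k" using Suc by simp
  have va: "case ch (Suc k) of Free i \<Rightarrow> 1 \<le> i \<and> i < Suc k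
      | Sat i j \<Rightarrow> 1 \<le> i \<and> i < Suc k \<and> 1 \<le> j \<and> j < Suc k \<and> i \<noteq> j \<and> dgraph ch (Suc k - 1) i j"
    using valid_at[OF V _ Suc(3)] Suc(1) by auto
  show ?case
  proof (cases "ch (Suc k)")
    case (Free i)
    then show ?thesis using tree_free[OF T, of i] va dg_suc[OF Suc(1), of ch] by simp
  next
    case (Sat i j)
    then show ?thesis using tree_sat[OF T, of i j] va dg_suc[OF Suc(1), of ch] by simp
  qed
qed

lemma proxmat_upper:
  assumes V: "valid_blowups N ch" "c \<le> N" "c < a"
  shows "proxmat ch c a = 0"
  using prox_lt[OF assms(1,2)] assms(3) unfolding proxmat_def by force

lemma PtP_Suc:
  "PtP (Suc k) ch a b = PtP k ch a b + proxmat ch (Suc k) a * proxmat ch (Suc k) b"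
  unfolding PtP_def by (simp add: sum.cl_ivl_Suc)

lemma PtP_offdiag:
  assumes V: "valid_blowups N ch"
  shows "1 \<le> k \<Longrightarrow> k \<le> N \<Longrightarrow> a \<in> {1..k} \<Longrightarrow> b \<in> {1..k} \<Longrightarrow> a \<noteq> b \<Longrightarrow>
     PtP k ch a b = (if dgraph ch k a b then -1 else 0)"
proof (induction k arbitrary: a b rule: nat_induct_at_least)
  case base
  then show ?case by auto
next
  case (Suc k)
  have T: "tree_inv (dgraph ch k) k" using tree_dg[OF V] Suc by simp
  have va: "case ch (Suc k) of Free i \<Rightarrow> 1 \<le> i \<and> i < Suc k
      | Sat i j \<Rightarrow> 1 \<le> i \<and> i < Suc k \<and> 1 \<le> j \<and> j < Suc k \<and> i \<noteq> j \<and> dgraph ch (Suc k - 1) i j"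
    using valid_at[OF V _ Suc(3)] Suc(1) by auto
  have Rk: "\<And>a b. dgraph ch k a b \<Longrightarrow> a \<in> {1..k} \<and> b \<in> {1..k} \<and> a \<noteq> b \<and> dgraph ch k b a"
    using T unfolding tree_inv_def by blast
  note dgs = dg_suc[OF Suc(1), of ch]
  have col0: "\<And>x. x \<in> {1..k} \<Longrightarrow> PtP k ch (Suc k) x = 0"
    unfolding PtP_def using proxmat_upper[OF V] Suc(3) by (intro sum.neutral) auto
  have pm: "\<And>x. x \<noteq> Suc k \<Longrightarrow> proxmat ch (Suc k) x = (if proximate ch (Suc k) x then -1 else 0)"
    unfolding proxmat_def by simp
  have pr: "\<And>x. proximate ch (Suc k) x = (case ch (Suc k) of Free i \<Rightarrow> x = i | Sat i j \<Rightarrow> x = i \<or> x = j)"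
    unfolding proximate_def using Suc(1) by (simp split: bchoice.split)
  have sym0: "\<And>x y. PtP k ch x y = PtP k ch y x" unfolding PtP_def by (simp add: mult.commute)
  consider "a \<in> {1..k}" "b \<in> {1..k}" | "a = Suc k" "b \<in> {1..k}" | "b = Suc k" "a \<in> {1..k}"
    using Suc(4,5,6) by fastforce
  then show ?case
  proof cases
    case 1
    have IH: "PtP k ch a b = (if dgraph ch k a b then -1 else 0)" using Suc(2)[OF _ 1] Suc(3,6) by simp
    have ab: "a \<noteq> Suc k" "b \<noteq> Suc k" using 1 by auto
    show ?thesis
    proof (cases "ch (Suc k)")
      case (Free i)
      then show ?thesis using IH PtP_Suc[of k ch a b] pm[OF ab(1)] pm[OF ab(2)] pr dgs Suc(6) ab
        by auto
    next
      case (Sat i j)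
      have gij: "dgraph ch k i j" using va Sat by simp
      show ?thesis
      proof (cases "{a,b} = {i,j}")
        case True
        have "dgraph ch k a b" using True gij Rk by (auto simp: doubleton_eq_iff)
        moreover have "proximate ch (Suc k) a" "proximate ch (Suc k) b"
          using True pr Sat by (auto simp: doubleton_eq_iff)
        ultimately show ?thesis using IH PtP_Suc[of k ch a b] pm[OF ab(1)] pm[OF ab(2)] dgs Sat True ab by simp
      next
        case False
        then have "\<not> (proximate ch (Suc k) a \<and> proximate ch (Suc k) b)"
          using pr Sat Suc(6) by auto
        then have "proxmat ch (Suc k) a * proxmat ch (Suc k) b = 0" using pm ab by auto
        then show ?thesis using IH PtP_Suc[of k ch a b] dgs Sat False ab by simp
      qed
    qed
  next
    case 2
    have "PtP (Suc k) ch a b = proxmat ch (Suc k) b"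
      using PtP_Suc[of k ch a b] col0[OF 2(2)] 2 by (simp add: proxmat_def)
    moreover have "\<not> dgraph ch k a b" using Rk[of a b] 2 by auto
    ultimately show ?thesis using pm[of b] pr dgs 2 va
      by (cases "ch (Suc k)") auto
  next
    case 3
    have "PtP (Suc k) ch a b = proxmat ch (Suc k) a"
      using PtP_Suc[of k ch a b] col0[OF 3(2)] sym0[of a b] 3 by (simp add: proxmat_def)
    moreover have "\<not> dgraph ch k a b" using Rk[of a b] 3 by auto
    ultimately show ?thesis using pm[of a] pr dgs 3 va
      by (cases "ch (Suc k)") auto
  qed
qed


lemma PtP_quad:
  "(\<Sum>a\<in>{1..N}. \<Sum>b\<in>{1..N}. x a * PtP N ch a b * x b)
   = (\<Sum>c\<in>{1..N}. (\<Sum>a\<in>{1..N}. proxmat ch c a * x a)^2)"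
proof -
  have "(\<Sum>a\<in>{1..N}. \<Sum>b\<in>{1..N}. x a * PtP N ch a b * x b)
      = (\<Sum>a\<in>{1..N}. \<Sum>b\<in>{1..N}. \<Sum>c\<in>{1..N}. (proxmat ch c a * x a) * (proxmat ch c b * x b))"
    unfolding PtP_def by (simp add: sum_distrib_left sum_distrib_right algebra_simps)
  also have "\<dots> = (\<Sum>c\<in>{1..N}. \<Sum>a\<in>{1..N}. \<Sum>b\<in>{1..N}. (proxmat ch c a * x a) * (proxmat ch c b * x b))"
    by (subst sum.swap) (rule sum.cong[OF refl], rule sum.swap)
  also have "\<dots> = (\<Sum>c\<in>{1..N}. (\<Sum>a\<in>{1..N}. proxmat ch c a * x a)^2)"
    by (simp add: power2_eq_square sum_product)
  finally show ?thesis .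
qed

lemma pd:
  assumes V: "valid_blowups N ch"
    and Q: "(\<Sum>a\<in>{1..N}. \<Sum>b\<in>{1..N}. x a * PtP N ch a b * x b) \<le> 0"
  shows "\<forall>a\<in>{1..N}. x a = 0"
proof -
  have sq: "(\<Sum>c\<in>{1..N}. (\<Sum>a\<in>{1..N}. proxmat ch c a * x a)^2) \<le> 0"
    using Q PtP_quad by metis
  have z: "\<And>c. c \<in> {1..N} \<Longrightarrow> (\<Sum>a\<in>{1..N}. proxmat ch c a * x a) = 0"
  proof -
    fix c assume c: "c \<in> {1..N}"
    have "(\<Sum>c\<in>{1..N}. (\<Sum>a\<in>{1..N}. proxmat ch c a * x a)^2) = 0"
      using sq by (meson antisym sum_nonneg zero_le_power2)
    then have "\<forall>c\<in>{1..N}. (\<Sum>a\<in>{1..N}. proxmat ch c a * x a)^2 = 0"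
      by (subst (asm) sum_nonneg_eq_0_iff) auto
    then show "(\<Sum>a\<in>{1..N}. proxmat ch c a * x a) = 0" using c by simp
  qed
  have "\<And>c. c \<in> {1..N} \<longrightarrow> x c = 0"
  proof -
    fix c show "c \<in> {1..N} \<longrightarrow> x c = 0"
    proof (induction c rule: less_induct)
      case (less c)
      show ?case
      proof
        assume c: "c \<in> {1..N}"
        have "(\<Sum>a\<in>{1..N}. proxmat ch c a * x a) = (\<Sum>a\<in>{1..N}. if a = c then x a else 0)"
        proof (rule sum.cong)
          fix a assume a: "a \<in> {1..N}"
          show "proxmat ch c a * x a = (if a = c then x a else 0)"
          proof (cases "a < c")
            case True then show ?thesis using less a by auto
          next
            case False
            then show ?thesis using proxmat_upper[OF V, of c a] c by (cases "a = c") (auto simp: proxmat_def)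
          qed
        qed simp
        also have "\<dots> = x c" using c by simp
        finally show "x c = 0" using z[OF c] by simp
      qed
    qed
  qed
  then show ?thesis by blast
qed

definition DK :: "nat \<Rightarrow> (nat \<Rightarrow> bchoice) \<Rightarrow> (nat \<Rightarrow> rat) \<Rightarrow> nat \<Rightarrow> rat" where
  "DK N ch D k = (\<Sum>n\<in>{1..N}. D n * PtP N ch n k)"

lemma zero_lemma:
  assumes V: "valid_blowups N ch" and C: "C \<subseteq> {1..N}"
    and h1: "\<forall>k\<in>C. DK N ch D k = 0"
    and h2: "\<forall>l\<in>{1..N} - C. \<forall>k\<in>C. D l * PtP N ch l k = 0"
  shows "\<forall>k\<in>C. D k = 0"
proof -
  define x where "x k = (if k \<in> C then D k else 0)" for k
  have "\<And>b. b \<in> {1..N} \<Longrightarrow> (\<Sum>a\<in>{1..N}. x a * PtP N ch a b * x b) = 0"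
  proof -
    fix b assume b: "b \<in> {1..N}"
    show "(\<Sum>a\<in>{1..N}. x a * PtP N ch a b * x b) = 0"
    proof (cases "b \<in> C")
      case True
      have "(\<Sum>a\<in>{1..N}. x a * PtP N ch a b * x b) = (\<Sum>a\<in>{1..N}. D a * PtP N ch a b) * x b"
        unfolding sum_distrib_right
        by (rule sum.cong) (use h2 True in \<open>auto simp: x_def\<close>)
      also have "\<dots> = 0" using h1 True unfolding DK_def by simp
      finally show ?thesis .
    next
      case False then show ?thesis by (simp add: x_def)
    qed
  qed
  then have "(\<Sum>a\<in>{1..N}. \<Sum>b\<in>{1..N}. x a * PtP N ch a b * x b) = 0"
    by (subst sum.swap) simp
  then have X: "\<forall>a\<in>{1..N}. x a = 0" using pd[OF V] by simp
  show ?thesis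
  proof
    fix k assume k: "k \<in> C"
    then have "k \<in> {1..N}" using C by auto
    then have "x k = 0" using X by blast
    then show "D k = 0" using k by (simp add: x_def)
  qed
qed

lemma Koff:
  assumes V: "valid_blowups N ch" "1 \<le> N" "a \<in> {1..N}" "b \<in> {1..N}" "a \<noteq> b"
  shows "PtP N ch a b \<le> 0" and "dgraph ch N a b \<Longrightarrow> PtP N ch a b = -1"
  using PtP_offdiag[OF V(1,2) order_refl V(3,4,5)] by auto

lemma nonneg_lemma:
  assumes V: "valid_blowups N ch" "1 \<le> N" and S: "S \<subseteq> {1..N}"
    and h0: "\<forall>k\<in>{1..N} - S. D k = 0"
    and h1: "\<forall>k\<in>S. DK N ch D k \<ge> 0"
  shows "\<forall>k\<in>{1..N}. D k \<ge> 0"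
proof -
  define Dp where "Dp k = max 0 (D k)" for k
  define Dn where "Dn k = max 0 (- D k)" for k
  have DD: "\<And>k. D k = Dp k - Dn k" by (simp add: Dp_def Dn_def max_def)
  let ?K = "PtP N ch"
  have eq: "(\<Sum>b\<in>{1..N}. Dn b * DK N ch D b)
     = (\<Sum>b\<in>{1..N}. \<Sum>a\<in>{1..N}. Dn b * Dp a * ?K a b) - (\<Sum>b\<in>{1..N}. \<Sum>a\<in>{1..N}. Dn a * ?K a b * Dn b)"
    unfolding DK_def sum_distrib_left sum_subtractf[symmetric]
    by (rule sum.cong[OF refl], rule sum.cong[OF refl]) (simp add: DD algebra_simps)
  have t1: "(\<Sum>b\<in>{1..N}. \<Sum>a\<in>{1..N}. Dn b * Dp a * ?K a b) \<le> 0"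
  proof (rule sum_nonpos, rule sum_nonpos)
    fix b a assume b: "b \<in> {1..N}" and a: "a \<in> {1..N}"
    show "Dn b * Dp a * ?K a b \<le> 0"
    proof (cases "a = b")
      case True then show ?thesis by (simp add: Dp_def Dn_def max_def)
    next
      case False
      have "Dn b * Dp a \<ge> 0" by (simp add: Dp_def Dn_def)
      then show ?thesis using Koff(1)[OF V a b False] by (simp add: mult_nonneg_nonpos)
    qed
  qed
  have t2: "(\<Sum>b\<in>{1..N}. Dn b * DK N ch D b) \<ge> 0"
  proof (rule sum_nonneg)
    fix b assume b: "b \<in> {1..N}"
    show "Dn b * DK N ch D b \<ge> 0"
    proof (cases "b \<in> S")
      case True then show ?thesis using h1 by (simp add: Dn_def)
    next
      case False then show ?thesis using h0 b by (simp add: Dn_def)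
    qed
  qed
  have "(\<Sum>a\<in>{1..N}. \<Sum>b\<in>{1..N}. Dn a * ?K a b * Dn b) = (\<Sum>b\<in>{1..N}. \<Sum>a\<in>{1..N}. Dn a * ?K a b * Dn b)"
    by (rule sum.swap)
  then have "(\<Sum>a\<in>{1..N}. \<Sum>b\<in>{1..N}. Dn a * ?K a b * Dn b) \<le> 0" using eq t1 t2 by linarith
  then have "\<forall>a\<in>{1..N}. Dn a = 0" by (rule pd[OF V(1)])
  then show ?thesis by (auto simp: Dn_def max_def split: if_splits)
qed

lemma pos_lemma:
  assumes V: "valid_blowups N ch" "1 \<le> N" and S: "S \<subseteq> {1..N}" and b: "b \<in> S"
    and h0: "\<forall>k\<in>{1..N} - S. D k = 0"
    and h1: "\<forall>k\<in>S. DK N ch D k \<ge> 0"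
    and hb: "DK N ch D b > 0"
    and conn: "\<forall>k\<in>S. (b,k) \<in> {(x,y). x \<in> S \<and> y \<in> S \<and> x \<noteq> y \<and> dgraph ch N x y}\<^sup>*"
  shows "\<forall>k\<in>S. D k > 0"
proof -
  have nn: "\<forall>k\<in>{1..N}. D k \<ge> 0" by (rule nonneg_lemma[OF V S h0 h1])
  let ?K = "PtP N ch"
  have split: "\<And>y. y \<in> {1..N} \<Longrightarrow> DK N ch D y = D y * ?K y y + (\<Sum>n\<in>{1..N} - {y}. D n * ?K n y)"
    unfolding DK_def by (subst sum.remove[of _ y]) auto
  have offnp: "\<And>y A. y \<in> {1..N} \<Longrightarrow> A \<subseteq> {1..N} - {y} \<Longrightarrow> (\<Sum>n\<in>A. D n * ?K n y) \<le> 0"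
  proof -
    fix y A assume y: "y \<in> {1..N}" and A: "A \<subseteq> {1..N} - {y}"
    show "(\<Sum>n\<in>A. D n * ?K n y) \<le> 0"
    proof (rule sum_nonpos)
      fix n assume "n \<in> A"
      then have n: "n \<in> {1..N}" "n \<noteq> y" using A by auto
      show "D n * ?K n y \<le> 0" using nn n Koff(1)[OF V n(1) y n(2)] by (simp add: mult_nonneg_nonpos)
    qed
  qed
  have Db: "D b > 0"
  proof (rule ccontr)
    assume "\<not> D b > 0"
    then have "D b = 0" using nn b S by force
    then have "DK N ch D b \<le> 0" using split[of b] offnp[of b "{1..N} - {b}"] b S by auto
    then show False using hb by simp
  qed
  have "\<And>k. (b,k) \<in> {(x,y). x \<in> S \<and> y \<in> S \<and> x \<noteq> y \<and> dgraph ch N x y}\<^sup>* \<Longrightarrow> D k > 0"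
  proof -
    fix k assume "(b,k) \<in> {(x,y). x \<in> S \<and> y \<in> S \<and> x \<noteq> y \<and> dgraph ch N x y}\<^sup>*"
    then show "D k > 0"
    proof (induction rule: rtrancl_induct)
      case base then show ?case by (rule Db)
    next
      case (step x y)
      then have xy: "x \<in> S" "y \<in> S" "x \<noteq> y" "dgraph ch N x y" by auto
      have xI: "x \<in> {1..N}" and yI: "y \<in> {1..N}" using xy S by auto
      show "D y > 0"
      proof (rule ccontr)
        assume "\<not> D y > 0"
        then have Dy: "D y = 0" using nn yI by force
        have "(\<Sum>n\<in>{1..N} - {y}. D n * ?K n y) = D x * ?K x y + (\<Sum>n\<in>{1..N} - {y} - {x}. D n * ?K n y)"
          by (subst sum.remove[of _ x]) (use xI xy in auto)
        also have "\<dots> \<le> D x * ?K x y" using offnp[OF yI, of "{1..N} - {y} - {x}"] by auto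
        also have "\<dots> = - D x" using Koff(2)[OF V xI yI xy(3) xy(4)] by simp
        finally have "DK N ch D y < 0" using split[OF yI] Dy step(3) by simp
        then show False using h1 xy by force
      qed
    qed
  qed
  then show ?thesis using conn by blast
qed


definition Em :: "nat \<Rightarrow> (nat \<Rightarrow> bchoice) \<Rightarrow> nat \<Rightarrow> (nat \<times> nat) set" where
  "Em N ch m = {(a, b). a \<in> {1..N} - {m} \<and> b \<in> {1..N} - {m} \<and> a \<noteq> b \<and> dgraph ch N a b}"

lemma branch_eq: "branch N ch m n = (if n \<in> {1..N} - {m} then {w. (n,w) \<in> (Em N ch m)\<^sup>*} else {})"
  by (simp add: branch_def Let_def Em_def)

context
  fixes N ch
  assumes V: "valid_blowups N ch" and N1: "1 \<le> N"
begin

lemma TI: "tree_inv (dgraph ch N) N" using tree_dg[OF V N1 order_refl] .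

lemma dgR: "dgraph ch N a b \<Longrightarrow> a \<in> {1..N} \<and> b \<in> {1..N} \<and> a \<noteq> b \<and> dgraph ch N b a"
  using TI unfolding tree_inv_def by blast

lemma Acyc: "dgraph ch N a b \<Longrightarrow> (a,b) \<notin> {(x,y). dgraph ch N x y \<and> {x,y} \<noteq> {a,b}}\<^sup>*"
  using TI unfolding tree_inv_def by blast

lemma Conn: "x \<in> {1..N} \<Longrightarrow> (1,x) \<in> {(u,v). dgraph ch N u v}\<^sup>*"
  using TI unfolding tree_inv_def by blast

lemma Em_sym: "sym ((Em N ch m)\<^sup>*)"
  by (rule sym_rtrancl) (auto simp: sym_def Em_def dest: dgR)

lemma G_sym: "sym ({(u,v). dgraph ch N u v}\<^sup>*)"
  by (rule sym_rtrancl) (auto simp: sym_def dest: dgR)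

lemma Em_reach: "(n,w) \<in> (Em N ch m)\<^sup>* \<Longrightarrow> w = n \<or> w \<in> {1..N} - {m}"
  by (induction rule: rtrancl_induct) (auto simp: Em_def)

lemma B1: "branch N ch m n \<subseteq> {1..N} - {m}"
proof
  fix w assume w: "w \<in> branch N ch m n"
  then have "n \<in> {1..N} - {m}" "(n,w) \<in> (Em N ch m)\<^sup>*" unfolding branch_eq by (auto split: if_splits)
  then show "w \<in> {1..N} - {m}" using Em_reach[of n w m] by blast
qed

lemma B2: "n \<in> {1..N} - {m} \<Longrightarrow> n \<in> branch N ch m n"
  unfolding branch_eq by auto

lemma B3: "l \<in> branch N ch a b \<Longrightarrow> k \<in> {1..N} \<Longrightarrow> k \<noteq> a \<Longrightarrow> dgraph ch N l k \<Longrightarrow> k \<in> branch N ch a b"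
proof -
  assume l: "l \<in> branch N ch a b" and k: "k \<in> {1..N}" "k \<noteq> a" and d: "dgraph ch N l k"
  have b: "b \<in> {1..N} - {a}" and p: "(b,l) \<in> (Em N ch a)\<^sup>*" using l unfolding branch_eq by (auto split: if_splits)
  have "l \<in> {1..N} - {a}" using B1[of a b] l by blast
  then have "(l,k) \<in> Em N ch a" using k d dgR[OF d] by (auto simp: Em_def)
  then show ?thesis using p b unfolding branch_eq by auto
qed

lemma B4: "k \<in> branch N ch a b \<Longrightarrow>
   (b,k) \<in> {(x,y). x \<in> branch N ch a b \<and> y \<in> branch N ch a b \<and> x \<noteq> y \<and> dgraph ch N x y}\<^sup>*"
proof -
  assume k: "k \<in> branch N ch a b"
  have b: "b \<in> {1..N} - {a}" and p: "(b,k) \<in> (Em N ch a)\<^sup>*" using k unfolding branch_eq by (auto split: if_splits)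
  from p show ?thesis
  proof (induction rule: rtrancl_induct)
    case base then show ?case by simp
  next
    case (step y z)
    have "y \<in> branch N ch a b" "z \<in> branch N ch a b" using step(1,2) b
      unfolding branch_eq by (auto intro: rtrancl_into_rtrancl)
    then show ?case using step(2,3) by (auto simp: Em_def intro: rtrancl_into_rtrancl)
  qed
qed

lemma B5: "finite (branch N ch a b)" using B1 finite_subset by blast

lemma T2: "n \<in> nbrs N ch m \<Longrightarrow> n' \<in> nbrs N ch m \<Longrightarrow> n \<noteq> n' \<Longrightarrow>
   branch N ch m n \<inter> branch N ch m n' = {}"
proof (rule ccontr)
  assume n: "n \<in> nbrs N ch m" and n': "n' \<in> nbrs N ch m" and nn: "n \<noteq> n'"
    and "branch N ch m n \<inter> branch N ch m n' \<noteq> {}"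
  then obtain x where x: "x \<in> branch N ch m n" "x \<in> branch N ch m n'" by auto
  have p1: "(n,x) \<in> (Em N ch m)\<^sup>*" and p2: "(n',x) \<in> (Em N ch m)\<^sup>*"
    using x unfolding branch_eq by (auto split: if_splits)
  have p2': "(x,n') \<in> (Em N ch m)\<^sup>*" using p2 Em_sym by (auto simp: sym_def)
  let ?A = "{(x,y). dgraph ch N x y \<and> {x,y} \<noteq> {m,n'}}"
  have sub: "Em N ch m \<subseteq> ?A" by (auto simp: Em_def)
  have "(n,n') \<in> ?A\<^sup>*" using rtrancl_mono[OF sub] p1 p2' by (meson rtrancl_trans subsetD)
  moreover have "(m,n) \<in> ?A" using n nn by (auto simp: nbrs_def doubleton_eq_iff)
  ultimately have "(m,n') \<in> ?A\<^sup>*" by (meson converse_rtrancl_into_rtrancl)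
  moreover have "dgraph ch N m n'" using n' by (simp add: nbrs_def)
  ultimately show False using Acyc by blast
qed

lemma T2': "n \<in> nbrs N ch m \<Longrightarrow> j \<in> branch N ch m n \<Longrightarrow> m \<notin> branch N ch n j"
proof
  assume n: "n \<in> nbrs N ch m" and j: "j \<in> branch N ch m n" and m: "m \<in> branch N ch n j"
  have p1: "(n,j) \<in> (Em N ch m)\<^sup>*" using j unfolding branch_eq by (auto split: if_splits)
  have p2: "(j,m) \<in> (Em N ch n)\<^sup>*" using m unfolding branch_eq by (auto split: if_splits)
  let ?A = "{(x,y). dgraph ch N x y \<and> {x,y} \<noteq> {n,m}}"
  have s1: "Em N ch m \<subseteq> ?A" by (auto simp: Em_def doubleton_eq_iff)
  have s2: "Em N ch n \<subseteq> ?A" by (auto simp: Em_def doubleton_eq_iff)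
  have "(n,m) \<in> ?A\<^sup>*" using rtrancl_mono[OF s1] rtrancl_mono[OF s2] p1 p2 by (meson rtrancl_trans subsetD)
  moreover have "dgraph ch N n m" using n dgR by (auto simp: nbrs_def)
  ultimately show False using Acyc by blast
qed

lemma T2'': "n \<in> nbrs N ch m \<Longrightarrow> n' \<in> nbrs N ch m \<Longrightarrow> j \<in> branch N ch m n \<Longrightarrow> n' \<notin> branch N ch n j"
proof
  assume n: "n \<in> nbrs N ch m" and n': "n' \<in> nbrs N ch m" and j: "j \<in> branch N ch m n"
    and c: "n' \<in> branch N ch n j"
  show False
  proof (cases "n' = n")
    case True then show False using c B1 by auto
  next
    case False
    have "m \<in> {1..N}" "m \<noteq> n" "dgraph ch N n' m" using n n' dgR by (auto simp: nbrs_def)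
    then have "m \<in> branch N ch n j" using B3[OF c] by blast
    then show False using T2'[OF n j] by blast
  qed
qed

lemma T3: "m \<in> {1..N} \<Longrightarrow> i \<in> {1..N} \<Longrightarrow> i \<noteq> m \<Longrightarrow> \<exists>n\<in>nbrs N ch m. i \<in> branch N ch m n"
proof -
  assume m: "m \<in> {1..N}" and i: "i \<in> {1..N}" "i \<noteq> m"
  have "(m,1) \<in> {(u,v). dgraph ch N u v}\<^sup>*" using Conn[OF m] G_sym by (auto simp: sym_def)
  then have "(m,i) \<in> {(u,v). dgraph ch N u v}\<^sup>*" using Conn[OF i(1)] by (meson rtrancl_trans)
  then have "i = m \<or> (\<exists>n\<in>nbrs N ch m. i \<in> branch N ch m n)"
  proof (induction rule: rtrancl_induct)
    case base then show ?case by simp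
  next
    case (step x y)
    have d: "dgraph ch N x y" using step(2) by simp
    show ?case
    proof (cases "y = m")
      case True then show ?thesis by simp
    next
      case False
      show ?thesis
      proof (cases "x = m")
        case True
        then have "y \<in> nbrs N ch m" using d dgR[OF d] False by (auto simp: nbrs_def)
        moreover have "y \<in> branch N ch m y" using B2 dgR[OF d] False by auto
        ultimately show ?thesis by blast
      next
        case xm: False
        then obtain n where "n \<in> nbrs N ch m" "x \<in> branch N ch m n" using step(3) by blast
        then show ?thesis using B3[of x m n y] d dgR[OF d] False by blast
      qed
    qed
  qed
  then show ?thesis using i by blast
qed

end

lemma DK_vecmat:
  assumes M: "is_valuation_matrix N ch M" and k: "k \<in> {1..N}"
  shows "DK N ch (vecmat N x M) k = x k"
proof -
  have "DK N ch (vecmat N x M) k = (\<Sum>n\<in>{1..N}. \<Sum>a\<in>{1..N}. x a * (M a n * PtP N ch n k))"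
    unfolding DK_def vecmat_def sum_distrib_right by (simp add: mult.assoc)
  also have "\<dots> = (\<Sum>a\<in>{1..N}. x a * (\<Sum>n\<in>{1..N}. M a n * PtP N ch n k))"
    by (subst sum.swap) (simp add: sum_distrib_left)
  also have "\<dots> = (\<Sum>a\<in>{1..N}. x a * (if a = k then 1 else 0))"
    using M k unfolding is_valuation_matrix_def by (intro sum.cong) auto
  also have "\<dots> = x k" using k by (simp add: if_distrib cong: if_cong)
  finally show ?thesis .
qed

lemma vecmat_unit: "a \<in> {1..N} \<Longrightarrow> vecmat N (unitv a) M n = M a n"
proof -
  assume a: "a \<in> {1..N}"
  have "vecmat N (unitv a) M n = (\<Sum>aa\<in>{1..N}. if aa = a then M a n else 0)"
    unfolding vecmat_def unitv_def by (rule sum.cong) auto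
  then show ?thesis using a by simp
qed

lemma vecmat_rhat: "a \<in> {1..N} \<Longrightarrow> b \<in> {1..N} \<Longrightarrow>
   vecmat N (rhat M a b) M n = M b n - rho M a b a * M a n"
proof -
  assume a: "a \<in> {1..N}" and b: "b \<in> {1..N}"
  have "vecmat N (rhat M a b) M n = vecmat N (unitv b) M n - rho M a b a * vecmat N (unitv a) M n"
    unfolding vecmat_def rhat_def by (simp add: sum_subtractf sum_distrib_left left_diff_distrib mult.assoc)
  then show ?thesis using vecmat_unit[OF a] vecmat_unit[OF b] by simp
qed

lemma vecmat_sum: "finite A \<Longrightarrow> vecmat N (\<lambda>k. \<Sum>s\<in>A. c s * v s k) M i = (\<Sum>s\<in>A. c s * vecmat N (v s) M i)"
  unfolding vecmat_def
  by (simp add: sum_distrib_right sum_distrib_left algebra_simps) (rule sum.swap)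

context
  fixes N ch M
  assumes V: "valid_blowups N ch" and N1: "1 \<le> N" and VM: "is_valuation_matrix N ch M"
begin

lemma Mpos: "m \<in> {1..N} \<Longrightarrow> n \<in> {1..N} \<Longrightarrow> M m n > 0"
proof -
  assume m: "m \<in> {1..N}" and n: "n \<in> {1..N}"
  let ?R = "{(x,y). x \<in> {1..N} \<and> y \<in> {1..N} \<and> x \<noteq> y \<and> dgraph ch N x y}"
  have Req: "?R = {(u,v). dgraph ch N u v}" using dgR[OF V N1] by auto
  have conn: "\<forall>k\<in>{1..N}. (m,k) \<in> ?R\<^sup>*"
  proof
    fix k assume k: "k \<in> {1..N}"
    have "(m,1) \<in> {(u,v). dgraph ch N u v}\<^sup>*" using Conn[OF V N1 m] G_sym[OF V N1] by (auto simp: sym_def)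
    then show "(m,k) \<in> ?R\<^sup>*" using Conn[OF V N1 k] Req by (metis rtrancl_trans)
  qed
  have "\<forall>k\<in>{1..N}. vecmat N (unitv m) M k > 0"
    by (rule pos_lemma[OF V N1 order_refl m])
       (use DK_vecmat[OF VM] m conn in \<open>auto simp: unitv_def\<close>)
  then show ?thesis using n vecmat_unit[OF m] by metis
qed

lemma Wlem:
  assumes a: "a \<in> {1..N}" and b: "b \<in> {1..N}" and ab: "a \<noteq> b"
  shows "\<forall>x\<in>{1..N}. (x \<in> branch N ch a b \<longrightarrow> vecmat N (rhat M a b) M x > 0)
                   \<and> (x \<notin> branch N ch a b \<longrightarrow> vecmat N (rhat M a b) M x = 0)"
proof -
  define D where "D = vecmat N (rhat M a b) M"
  define B where "B = branch N ch a b"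
  define C where "C = {1..N} - B - {a}"
  have Da: "D a = 0" using vecmat_rhat[OF a b, of M a] Mpos[OF a a] unfolding D_def rho_def by simp
  have DK: "\<And>k. k \<in> {1..N} \<Longrightarrow> DK N ch D k = rhat M a b k" unfolding D_def by (rule DK_vecmat[OF VM])
  have bB: "b \<in> B" unfolding B_def using B2[OF V N1] b ab by auto
  have BI: "B \<subseteq> {1..N} - {a}" unfolding B_def by (rule B1[OF V N1])
  have DC: "\<forall>k\<in>C. D k = 0"
  proof (rule zero_lemma[OF V])
    show "C \<subseteq> {1..N}" unfolding C_def by auto
    show "\<forall>k\<in>C. DK N ch D k = 0" using DK bB unfolding C_def rhat_def unitv_def by auto
    show "\<forall>l\<in>{1..N} - C. \<forall>k\<in>C. D l * PtP N ch l k = 0"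
    proof (intro ballI)
      fix l k assume l: "l \<in> {1..N} - C" and k: "k \<in> C"
      show "D l * PtP N ch l k = 0"
      proof (cases "l = a")
        case True then show ?thesis using Da by simp
      next
        case False
        then have lB: "l \<in> B" using l unfolding C_def by auto
        have kI: "k \<in> {1..N}" "k \<noteq> a" "k \<notin> B" using k unfolding C_def by auto
        have "\<not> dgraph ch N l k" using B3[OF V N1, of l a b k] lB kI unfolding B_def by blast
        moreover have "l \<noteq> k" using lB kI by auto
        ultimately have "PtP N ch l k = 0" using PtP_offdiag[OF V N1 order_refl, of l k] lB BI kI by auto
        then show ?thesis by simp
      qed
    qed
  qed
  have DB: "\<forall>k\<in>B. D k > 0"
  proof (rule pos_lemma[OF V N1 _ bB])
    show "B \<subseteq> {1..N}" using BI by auto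
    show "\<forall>k\<in>{1..N} - B. D k = 0" using DC Da unfolding C_def by auto
    show "\<forall>k\<in>B. 0 \<le> DK N ch D k"
    proof
      fix k assume "k \<in> B"
      then have k: "k \<in> {1..N}" "k \<noteq> a" using BI by auto
      show "0 \<le> DK N ch D k" using DK[OF k(1)] k(2) unfolding rhat_def unitv_def by simp
    qed
    show "0 < DK N ch D b" using DK b ab unfolding rhat_def unitv_def by auto
    show "\<forall>k\<in>B. (b, k) \<in> {(x, y). x \<in> B \<and> y \<in> B \<and> x \<noteq> y \<and> dgraph ch N x y}\<^sup>*"
      unfolding B_def using B4[OF V N1] by blast
  qed
  show ?thesis using DB DC Da unfolding D_def B_def C_def by auto
qed

end

lemma vecmat_sum': "vecmat N (\<lambda>k. \<Sum>s\<in>A. v s k) M i = (\<Sum>s\<in>A. vecmat N (v s) M i)"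
  unfolding vecmat_def by (simp add: sum_distrib_right) (rule sum.swap)

lemma vecmat_scale: "vecmat N (\<lambda>k. c * v k) M i = c * vecmat N v M i"
  unfolding vecmat_def by (simp add: sum_distrib_left mult.assoc)

lemma vecmat_lin: "vecmat N (\<lambda>k. a k - b k + c k) M i = vecmat N a M i - vecmat N b M i + vecmat N c M i"
  unfolding vecmat_def by (simp add: algebra_simps sum.distrib sum_subtractf)

lemma vecmat_fmod:
  "vecmat N (fmod N ch M m fh gh hh) M i = vecmat N fh M i
     - (\<Sum>n\<in>nbrs N ch m. \<Sum>j\<in>branch N ch m n. gh j * vecmat N (rhat M n j) M i)
     + (\<Sum>n\<in>nbrs N ch m. hh n * vecmat N (rhat M m n) M i)"
proof -
  have e: "fmod N ch M m fh gh hh = (\<lambda>k. fh k - (\<Sum>n\<in>nbrs N ch m. \<Sum>j\<in>branch N ch m n. gh j * rhat M n j k)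
          + (\<Sum>n\<in>nbrs N ch m. hh n * rhat M m n k))"
    by (rule ext) (simp add: fmod_def)
  show ?thesis unfolding e vecmat_lin vecmat_sum' vecmat_scale ..
qed

lemma sum_pos_iff:
  fixes f :: "'a \<Rightarrow> rat"
  assumes "finite A" "\<forall>x\<in>A. 0 \<le> f x"
  shows "(0 < sum f A) = (\<exists>x\<in>A. 0 < f x)"
proof -
  have "0 \<le> sum f A" using assms by (simp add: sum_nonneg)
  moreover have "(sum f A = 0) = (\<forall>x\<in>A. f x = 0)" using assms sum_nonneg_eq_0_iff by blast
  ultimately show ?thesis using assms by force
qed

context
  fixes N ch M m
  assumes V: "valid_blowups N ch" and N1: "1 \<le> N" and VM: "is_valuation_matrix N ch M"
    and m: "m \<in> {1..N}"
begin

lemma nbI: "nbrs N ch m \<subseteq> {1..N} - {m}" by (auto simp: nbrs_def)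
lemma nbF: "finite (nbrs N ch m)" using nbI finite_subset by blast

lemma rho_self: "a \<in> {1..N} \<Longrightarrow> rho M a a a = 1"
  using Mpos[OF V N1 VM, of a a] by (simp add: rho_def)

lemma rhat_self: "a \<in> {1..N} \<Longrightarrow> rhat M a a k = 0"
  using rho_self by (simp add: rhat_def unitv_def)

lemma br_self: "branch N ch a a = {}" by (simp add: branch_eq)

lemma W_nb: "a \<in> {1..N} \<Longrightarrow> b \<in> {1..N} \<Longrightarrow> x \<in> {1..N} \<Longrightarrow>
   0 \<le> vecmat N (rhat M a b) M x \<and> (0 < vecmat N (rhat M a b) M x \<longleftrightarrow> x \<in> branch N ch a b)"
proof -
  assume a: "a \<in> {1..N}" and b: "b \<in> {1..N}" and x: "x \<in> {1..N}"
  show ?thesis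
  proof (cases "a = b")
    case True
    then show ?thesis using rhat_self[OF a] br_self by (simp add: vecmat_def)
  next
    case False
    then show ?thesis using Wlem[OF V N1 VM a b False] x by force
  qed
qed

lemma part1:
  assumes i: "i \<in> {1..N}"
  shows "fmod N ch M m fh gh hh i =
        (if i = m then fh m - (\<Sum>n\<in>nbrs N ch m. rho M m n m * hh n)
         else if i \<in> nbrs N ch m then
           fh i + hh i + (\<Sum>j\<in>branch N ch m i - {i}. rho M i j m * gh j)
         else fh i - gh i)"
proof -
  let ?nb = "nbrs N ch m"
  have fm: "fmod N ch M m fh gh hh i = fh i - (\<Sum>n\<in>?nb. \<Sum>j\<in>branch N ch m n. gh j * rhat M n j i)
          + (\<Sum>n\<in>?nb. hh n * rhat M m n i)" by (simp add: fmod_def)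
  show ?thesis
  proof (cases "i = m")
    case True
    have s1: "(\<Sum>n\<in>?nb. \<Sum>j\<in>branch N ch m n. gh j * rhat M n j i) = 0"
    proof (rule sum.neutral, rule ballI, rule sum.neutral, rule ballI)
      fix n j assume n: "n \<in> ?nb" and j: "j \<in> branch N ch m n"
      have "j \<noteq> m" using B1[OF V N1, of m n] j by auto
      moreover have "n \<noteq> m" using n nbI by auto
      ultimately show "gh j * rhat M n j i = 0" using True by (simp add: rhat_def unitv_def)
    qed
    have s2: "(\<Sum>n\<in>?nb. hh n * rhat M m n i) = - (\<Sum>n\<in>?nb. rho M m n m * hh n)"
      unfolding sum_negf[symmetric]
    proof (rule sum.cong[OF refl])
      fix n assume n: "n \<in> ?nb"
      then have "n \<noteq> m" using nbI by auto
      then show "hh n * rhat M m n i = - (rho M m n m * hh n)" using True by (simp add: rhat_def unitv_def)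
    qed
    show ?thesis using fm s1 s2 True by simp
  next
    case im: False
    show ?thesis
    proof (cases "i \<in> ?nb")
      case True
      have Bi: "i \<in> branch N ch m i" using B2[OF V N1] i im by auto
      have F0: "\<And>n. n \<in> ?nb - {i} \<Longrightarrow> (\<Sum>j\<in>branch N ch m n. gh j * rhat M n j i) = 0"
      proof -
        fix n assume n: "n \<in> ?nb - {i}"
        have disj: "branch N ch m n \<inter> branch N ch m i = {}" using T2[OF V N1, of n m i] n True by auto
        show "(\<Sum>j\<in>branch N ch m n. gh j * rhat M n j i) = 0"
        proof (rule sum.neutral, rule ballI)
          fix j assume "j \<in> branch N ch m n"
          then have "j \<noteq> i" using disj Bi by auto
          then show "gh j * rhat M n j i = 0" using n by (simp add: rhat_def unitv_def)
        qed
      qed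
      have s1: "(\<Sum>n\<in>?nb. \<Sum>j\<in>branch N ch m n. gh j * rhat M n j i)
          = (\<Sum>j\<in>branch N ch m i. gh j * rhat M i j i)"
        using sum.remove[OF nbF True, of "\<lambda>n. \<Sum>j\<in>branch N ch m n. gh j * rhat M n j i"] F0
        by simp
      also have "\<dots> = gh i * rhat M i i i + (\<Sum>j\<in>branch N ch m i - {i}. gh j * rhat M i j i)"
        using sum.remove[OF B5[OF V N1] Bi] by simp
      also have "\<dots> = - (\<Sum>j\<in>branch N ch m i - {i}. rho M i j m * gh j)"
        unfolding sum_negf[symmetric] rhat_self[OF i]
      proof (simp, rule sum.cong[OF refl])
        fix j assume j: "j \<in> branch N ch m i - {i}"
        have jI: "j \<in> {1..N}" using B1[OF V N1, of m i] j by auto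
        have "m \<notin> branch N ch i j" using T2'[OF V N1 True] j by auto
        then have "vecmat N (rhat M i j) M m = 0" using W_nb[OF i jI m] by auto
        then have "M j m - rho M i j i * M i m = 0" using vecmat_rhat[OF i jI] by simp
        then have "rho M i j i = rho M i j m" using Mpos[OF V N1 VM i m] by (simp add: rho_def field_simps)
        then show "gh j * rhat M i j i = - (rho M i j m * gh j)" using j by (simp add: rhat_def unitv_def)
      qed
      finally have s1': "(\<Sum>n\<in>?nb. \<Sum>j\<in>branch N ch m n. gh j * rhat M n j i)
          = - (\<Sum>j\<in>branch N ch m i - {i}. rho M i j m * gh j)" .
      have s2: "(\<Sum>n\<in>?nb. hh n * rhat M m n i) = (\<Sum>n\<in>?nb. if n = i then hh i else 0)"
        by (rule sum.cong[OF refl]) (use im in \<open>simp add: rhat_def unitv_def\<close>)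
      also have "\<dots> = hh i" using True nbF by simp
      finally show ?thesis using fm s1' im True by simp
    next
      case False
      obtain n0 where n0: "n0 \<in> ?nb" "i \<in> branch N ch m n0" using T3[OF V N1 m i im] by blast
      have s1: "(\<Sum>n\<in>?nb. \<Sum>j\<in>branch N ch m n. gh j * rhat M n j i) = (\<Sum>n\<in>?nb. if n = n0 then gh i else 0)"
      proof (rule sum.cong[OF refl])
        fix n assume n: "n \<in> ?nb"
        then have ni: "n \<noteq> i" using False by auto
        have "(\<Sum>j\<in>branch N ch m n. gh j * rhat M n j i) = (\<Sum>j\<in>branch N ch m n. if j = i then gh i else 0)"
          by (rule sum.cong[OF refl]) (use ni in \<open>simp add: rhat_def unitv_def\<close>)
        also have "\<dots> = (if i \<in> branch N ch m n then gh i else 0)" using B5[OF V N1] by simp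
        also have "\<dots> = (if n = n0 then gh i else 0)"
          using T2[OF V N1 n n0(1)] n0(2) by auto
        finally show "(\<Sum>j\<in>branch N ch m n. gh j * rhat M n j i) = (if n = n0 then gh i else 0)" .
      qed
      also have "\<dots> = gh i" using n0 nbF by simp
      finally have s1': "(\<Sum>n\<in>?nb. \<Sum>j\<in>branch N ch m n. gh j * rhat M n j i) = gh i" .
      have s2: "(\<Sum>n\<in>?nb. hh n * rhat M m n i) = 0"
        by (rule sum.neutral) (use im False in \<open>auto simp: rhat_def unitv_def\<close>)
      show ?thesis using fm s1' s2 im False by simp
    qed
  qed
qed

end

context
  fixes N ch M m
  assumes V: "valid_blowups N ch" and N1: "1 \<le> N" and VM: "is_valuation_matrix N ch M"
    and m: "m \<in> {1..N}"
begin

lemma part2: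
  assumes i: "i \<in> {1..N}"
  shows "vecmat N (fmod N ch M m fh gh (\<lambda>_. 0)) M i =
          vecmat N fh M i - (\<Sum>n\<in>nbrs N ch m. \<Sum>j\<in>branch N ch m n. gh j * phi N M n j m i * M m i)"
proof -
  have p: "\<And>n j. gh j * phi N M n j m i * M m i = gh j * vecmat N (rhat M n j) M i"
    using Mpos[OF V N1 VM m i] by (simp add: phi_def)
  show ?thesis unfolding vecmat_fmod p by simp
qed

lemma part3:
  assumes i: "i \<in> {1..N}"
  shows "vecmat N (fmod N ch M m fh (\<lambda>_. 0) hh) M i =
          vecmat N fh M i + (\<Sum>n\<in>nbrs N ch m. hh n * phi N M m n m i * M m i)"
proof -
  have p: "\<And>n. hh n * phi N M m n m i * M m i = hh n * vecmat N (rhat M m n) M i"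
    using Mpos[OF V N1 VM m i] by (simp add: phi_def)
  show ?thesis unfolding vecmat_fmod p by simp
qed

lemma part4:
  assumes g: "\<forall>j\<in>{1..N}. 0 \<le> gh j" and i: "i \<in> {1..N}"
  shows "vecmat N (fmod N ch M m fh gh (\<lambda>_. 0)) M i \<le> vecmat N fh M i
             \<and> (vecmat N (fmod N ch M m fh gh (\<lambda>_. 0)) M i < vecmat N fh M i \<longleftrightarrow>
                  (\<exists>n\<in>nbrs N ch m. \<exists>j\<in>branch N ch m n. 0 < gh j \<and> i \<in> branch N ch n j))
             \<and> ((i = m \<or> i \<in> nbrs N ch m) \<longrightarrow> vecmat N (fmod N ch M m fh gh (\<lambda>_. 0)) M i = vecmat N fh M i)"
proof -
  let ?nb = "nbrs N ch m"
  let ?T = "\<lambda>n j. gh j * vecmat N (rhat M n j) M i"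
  have e: "vecmat N (fmod N ch M m fh gh (\<lambda>_. 0)) M i = vecmat N fh M i - (\<Sum>n\<in>?nb. \<Sum>j\<in>branch N ch m n. ?T n j)"
    unfolding vecmat_fmod by simp
  have Tnn: "\<And>n j. n \<in> ?nb \<Longrightarrow> j \<in> branch N ch m n \<Longrightarrow> 0 \<le> ?T n j \<and> (0 < ?T n j \<longleftrightarrow> 0 < gh j \<and> i \<in> branch N ch n j)"
  proof -
    fix n j assume n: "n \<in> ?nb" and j: "j \<in> branch N ch m n"
    have nI: "n \<in> {1..N}" using n nbI[OF V N1 VM m] by auto
    have jI: "j \<in> {1..N}" using B1[OF V N1, of m n] j by auto
    have W: "0 \<le> vecmat N (rhat M n j) M i" "0 < vecmat N (rhat M n j) M i \<longleftrightarrow> i \<in> branch N ch n j"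
      using W_nb[OF V N1 VM m nI jI i] by auto
    have gj: "0 \<le> gh j" using g jI by auto
    show "0 \<le> ?T n j \<and> (0 < ?T n j \<longleftrightarrow> 0 < gh j \<and> i \<in> branch N ch n j)"
      using W gj by (auto simp: zero_less_mult_iff mult_nonneg_nonneg)
  qed
  have inner: "\<And>n. n \<in> ?nb \<Longrightarrow> 0 \<le> (\<Sum>j\<in>branch N ch m n. ?T n j) \<and>
       (0 < (\<Sum>j\<in>branch N ch m n. ?T n j) \<longleftrightarrow> (\<exists>j\<in>branch N ch m n. 0 < gh j \<and> i \<in> branch N ch n j))"
  proof -
    fix n assume n: "n \<in> ?nb"
    have "\<forall>j\<in>branch N ch m n. 0 \<le> ?T n j" using Tnn[OF n] by blast
    then show "?thesis n" using sum_pos_iff[OF B5[OF V N1]] Tnn[OF n] by (simp add: sum_nonneg)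
  qed
  have outer: "0 \<le> (\<Sum>n\<in>?nb. \<Sum>j\<in>branch N ch m n. ?T n j) \<and>
      (0 < (\<Sum>n\<in>?nb. \<Sum>j\<in>branch N ch m n. ?T n j) \<longleftrightarrow>
        (\<exists>n\<in>?nb. \<exists>j\<in>branch N ch m n. 0 < gh j \<and> i \<in> branch N ch n j))"
  proof -
    have "\<forall>n\<in>?nb. 0 \<le> (\<Sum>j\<in>branch N ch m n. ?T n j)" using inner by blast
    then show ?thesis using sum_pos_iff[OF nbF[OF V N1 VM m]] inner by (simp add: sum_nonneg)
  qed
  have eq: "(i = m \<or> i \<in> ?nb) \<longrightarrow> \<not> (\<exists>n\<in>?nb. \<exists>j\<in>branch N ch m n. 0 < gh j \<and> i \<in> branch N ch n j)"
    using T2'[OF V N1] T2''[OF V N1] by blast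
  show ?thesis using e outer eq by auto
qed

lemma part5:
  assumes h: "\<forall>j\<in>{1..N}. 0 \<le> hh j" and i: "i \<in> {1..N}"
  shows "vecmat N fh M i \<le> vecmat N (fmod N ch M m fh (\<lambda>_. 0) hh) M i
             \<and> (vecmat N fh M i < vecmat N (fmod N ch M m fh (\<lambda>_. 0) hh) M i \<longleftrightarrow>
                 (\<exists>n\<in>nbrs N ch m. 0 < hh n \<and> i \<in> branch N ch m n))"
proof -
  let ?nb = "nbrs N ch m"
  let ?T = "\<lambda>n. hh n * vecmat N (rhat M m n) M i"
  have e: "vecmat N (fmod N ch M m fh (\<lambda>_. 0) hh) M i = vecmat N fh M i + (\<Sum>n\<in>?nb. ?T n)"
    unfolding vecmat_fmod by simp
  have Tnn: "\<And>n. n \<in> ?nb \<Longrightarrow> 0 \<le> ?T n \<and> (0 < ?T n \<longleftrightarrow> 0 < hh n \<and> i \<in> branch N ch m n)"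
  proof -
    fix n assume n: "n \<in> ?nb"
    have nI: "n \<in> {1..N}" using n nbI[OF V N1 VM m] by auto
    have W: "0 \<le> vecmat N (rhat M m n) M i" "0 < vecmat N (rhat M m n) M i \<longleftrightarrow> i \<in> branch N ch m n"
      using W_nb[OF V N1 VM m m nI i] by auto
    have hn: "0 \<le> hh n" using h nI by auto
    show "0 \<le> ?T n \<and> (0 < ?T n \<longleftrightarrow> 0 < hh n \<and> i \<in> branch N ch m n)"
      using W hn by (auto simp: zero_less_mult_iff mult_nonneg_nonneg)
  qed
  have "\<forall>n\<in>?nb. 0 \<le> ?T n" using Tnn by blast
  then have "0 \<le> (\<Sum>n\<in>?nb. ?T n) \<and> (0 < (\<Sum>n\<in>?nb. ?T n) \<longleftrightarrow> (\<exists>n\<in>?nb. 0 < hh n \<and> i \<in> branch N ch m n))"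
    using sum_pos_iff[OF nbF[OF V N1 VM m]] Tnn by (simp add: sum_nonneg)
  then show ?thesis using e by auto
qed

end

theorem mainTheorem10:
  fixes N :: nat and ch :: "nat \<Rightarrow> bchoice" and V :: "nat \<Rightarrow> nat \<Rightarrow> rat"
    and m :: nat and fh gh hh :: "nat \<Rightarrow> rat"
  assumes "N \<ge> 1" and "valid_blowups N ch" and "is_valuation_matrix N ch V"
    and "m \<in> {1..N}"
  defines "f \<equiv> vecmat N fh V"
    and "fg \<equiv> vecmat N (fmod N ch V m fh gh (\<lambda>_. 0)) V"
    and "fhh \<equiv> vecmat N (fmod N ch V m fh (\<lambda>_. 0) hh) V"
  shows
    "(\<forall>i\<in>{1..N}. fmod N ch V m fh gh hh i =
        (if i = m then fh m - (\<Sum>n\<in>nbrs N ch m. rho V m n m * hh n)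
         else if i \<in> nbrs N ch m then
           fh i + hh i + (\<Sum>j\<in>branch N ch m i - {i}. rho V i j m * gh j)
         else fh i - gh i))
     \<and> (\<forall>i\<in>{1..N}. fg i =
          f i - (\<Sum>n\<in>nbrs N ch m. \<Sum>j\<in>branch N ch m n. gh j * phi N V n j m i * V m i))
     \<and> (\<forall>i\<in>{1..N}. fhh i =
          f i + (\<Sum>n\<in>nbrs N ch m. hh n * phi N V m n m i * V m i))
     \<and> ((\<forall>j\<in>{1..N}. 0 \<le> gh j) \<longrightarrow>
          (\<forall>i\<in>{1..N}. fg i \<le> f i
             \<and> (fg i < f i \<longleftrightarrow>
                  (\<exists>n\<in>nbrs N ch m. \<exists>j\<in>branch N ch m n. 0 < gh j \<and> i \<in> branch N ch n j))
             \<and> ((i = m \<or> i \<in> nbrs N ch m) \<longrightarrow> fg i = f i)))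
     \<and> ((\<forall>j\<in>{1..N}. 0 \<le> hh j) \<longrightarrow>
          (\<forall>i\<in>{1..N}. f i \<le> fhh i
             \<and> (f i < fhh i \<longleftrightarrow> (\<exists>n\<in>nbrs N ch m. 0 < hh n \<and> i \<in> branch N ch m n))))"
  unfolding f_def fg_def fhh_def
  using part1[OF assms(2,1,3,4)] part2[OF assms(2,1,3,4)] part3[OF assms(2,1,3,4)]
    part4[OF assms(2,1,3,4)] part5[OF assms(2,1,3,4)]
  by blast

end
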